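(* Let $K \ge 1$ be an integer and let $\Phi \in \mathbb{R}^{M \times N}$ satisfy the restricted isometry property of order $K+1$ with isometry constant $\delta < \frac{1}{3}$. Let $x \in \mathbb{R}^N$ with $\|x\|_0 \le K$, and let $x'(1), x'(2), \dots$ denote the entries of $x$ ordered by magnitude, $|x'(1)| \ge |x'(2)| \ge \cdots \ge |x'(K)| \ge 0$, with $x'(K+1) = \cdots = x'(N) = 0$. Suppose that for all $j \in \{1, 2, \dots, K-1\}$, $$\frac{|x'(j)|}{|x'(j+1)|} \ge \alpha, \qquad\text{where}\qquad \alpha > \frac{1 + 2\frac{\delta}{1-\delta}\sqrt{K-1}}{1 - 2\frac{\delta}{1-\delta}}.$$ Then Orthogonal Matching Pursuit applied to $\Phi$ and $y = \Phi x$ recovers $x$ exactly in $K$ iterations, i.e. $x^K = x$.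
   Context: For $x \in \mathbb{R}^N$, $\|x\|_0 := |\mathrm{supp}(x)|$ is the number of nonzero entries. A matrix $\Phi \in \mathbb{R}^{M\times N}$ satisfies the restricted isometry property (RIP) of order $K$ with isometry constant $\delta \in (0,1)$ if $(1-\delta)\|x\|_2^2 \le \|\Phi x\|_2^2 \le (1+\delta)\|x\|_2^2$ for all $x \in \mathbb{R}^N$ with $\|x\|_0 \le K$. Orthogonal Matching Pursuit (OMP) with input $\Phi$ and $y \in \mathbb{R}^M$: initialize $r^0 = y$, $x^0 = 0$, $\Lambda^0 = \emptyset$, $\ell = 0$. Each iteration: compute $h^\ell = \Phi^T r^\ell$; set $\Lambda^{\ell+1} = \Lambda^\ell \cup \{j^*\}$ where $j^*$ is an index maximizing $|h^\ell(j)|$ (if several maxima exist, exactly one is chosen); set $x^{\ell+1} = \arg\min_{z:\, \mathrm{supp}(z) \subseteq \Lambda^{\ell+1}} \|y - \Phi z\|_2$ and $r^{\ell+1} = y - \Phi x^{\ell+1}$; increment $\ell$. The output after $\ell$ iterations is $x^\ell$. *)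

theory Defs
  imports "Jordan_Normal_Form.Matrix"
begin

definition supp_vec :: "real vec \<Rightarrow> nat set" where
  "supp_vec v = {i. i < dim_vec v \<and> v $ i \<noteq> 0}"

definition l0 :: "real vec \<Rightarrow> nat" where
  "l0 v = card (supp_vec v)"

definition sqnorm :: "real vec \<Rightarrow> real" where
  "sqnorm v = (\<Sum>i<dim_vec v. (v $ i)^2)"

definition RIP :: "real mat \<Rightarrow> nat \<Rightarrow> real \<Rightarrow> bool" where
  "RIP \<Phi> K \<delta> \<longleftrightarrow> 0 < \<delta> \<and> \<delta> < 1 \<and>
     (\<forall>x \<in> carrier_vec (dim_col \<Phi>). l0 x \<le> K \<longrightarrow>
        (1 - \<delta>) * sqnorm x \<le> sqnorm (\<Phi> *\<^sub>v x) \<and>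
        sqnorm (\<Phi> *\<^sub>v x) \<le> (1 + \<delta>) * sqnorm x)"

definition mag_ord :: "real vec \<Rightarrow> nat \<Rightarrow> real" where
  "mag_ord x j = (if 1 \<le> j \<and> j \<le> dim_vec x
     then rev (sort (map abs (list_of_vec x))) ! (j - 1) else 0)"

definition is_lsq :: "real mat \<Rightarrow> real vec \<Rightarrow> nat set \<Rightarrow> real vec \<Rightarrow> bool" where
  "is_lsq \<Phi> y Lam z \<longleftrightarrow> z \<in> carrier_vec (dim_col \<Phi>) \<and> supp_vec z \<subseteq> Lam \<and>
     (\<forall>w \<in> carrier_vec (dim_col \<Phi>). supp_vec w \<subseteq> Lam \<longrightarrow>
        sqnorm (y - \<Phi> *\<^sub>v z) \<le> sqnorm (y - \<Phi> *\<^sub>v w))"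

text \<open>One OMP iteration from (Lam, xl) to (Lam', xl'), allowing any choice among maximizers
  (and any minimizer of the least-squares problem).\<close>
definition omp_step :: "real mat \<Rightarrow> real vec \<Rightarrow> nat set \<Rightarrow> real vec \<Rightarrow> nat set \<Rightarrow> real vec \<Rightarrow> bool" where
  "omp_step \<Phi> y Lam xl Lam' xl' \<longleftrightarrow>
     (let r = y - \<Phi> *\<^sub>v xl; h = transpose_mat \<Phi> *\<^sub>v r in
      \<exists>j < dim_col \<Phi>. (\<forall>i < dim_col \<Phi>. \<bar>h $ i\<bar> \<le> \<bar>h $ j\<bar>) \<and>
        Lam' = insert j Lam \<and> is_lsq \<Phi> y Lam' xl')"

definition omp_run :: "real mat \<Rightarrow> real vec \<Rightarrow> nat \<Rightarrow> (nat \<Rightarrow> nat set) \<Rightarrow> (nat \<Rightarrow> real vec) \<Rightarrow> bool" where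
  "omp_run \<Phi> y n Lam xs \<longleftrightarrow> Lam 0 = {} \<and> xs 0 = 0\<^sub>v (dim_col \<Phi>) \<and>
     (\<forall>l < n. omp_step \<Phi> y (Lam l) (xs l) (Lam (Suc l)) (xs (Suc l)))"

end

theory Submission
  imports Defs "HOL-Combinatorics.List_Permutation"
begin


lemma order_lemma:
  fixes x :: "real vec" and \<alpha> :: real
  assumes xc: "x \<in> carrier_vec N" and l0: "l0 x \<le> K" and a1: "\<alpha> > 1"
    and hyp: "\<forall>j \<in> {1..K-1}. \<bar>mag_ord x j\<bar> \<ge> \<alpha> * \<bar>mag_ord x (j + 1)\<bar>"
    and ik: "i < N" "k < N" "i \<noteq> k" "x $ i \<noteq> 0" "\<bar>x $ i\<bar> \<le> \<bar>x $ k\<bar>"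
  shows "\<alpha> * \<bar>x $ i\<bar> \<le> \<bar>x $ k\<bar>"
proof -
  define xl where "xl = map abs (list_of_vec x)"
  define L where "L = rev (sort xl)"
  have dimx: "dim_vec x = N" using xc by auto
  have lxl: "length xl = N" unfolding xl_def using dimx by simp
  have lL: "length L = N" unfolding L_def using lxl by simp
  have xlnth: "\<And>i. i < N \<Longrightarrow> xl ! i = \<bar>x $ i\<bar>" unfolding xl_def using dimx
    by (simp add: list_of_vec_index)
  have "mset xl = mset L" unfolding L_def by simp
  then obtain f where f: "bij_betw f {..<length xl} {..<length L}" "\<forall>i<length xl. xl ! i = L ! (f i)"
    using permutation_Ex_bij by blast
  have fb: "bij_betw f {..<N} {..<N}" using f lxl lL by simp
  have fv: "\<And>i. i < N \<Longrightarrow> \<bar>x $ i\<bar> = L ! (f i)" using f lxl xlnth by simp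
  have sorted: "\<And>p q. p \<le> q \<Longrightarrow> q < N \<Longrightarrow> L ! q \<le> L ! p"
  proof -
    fix p q assume pq: "p \<le> q" "q < N"
    have s: "sorted (sort xl)" by simp
    have "L ! q = sort xl ! (N - Suc q)" unfolding L_def using pq lxl by (simp add: rev_nth)
    moreover have "L ! p = sort xl ! (N - Suc p)" unfolding L_def using pq lxl by (simp add: rev_nth)
    moreover have "sort xl ! (N - Suc q) \<le> sort xl ! (N - Suc p)"
      using sorted_nth_mono[OF s] pq lxl by simp
    ultimately show "L ! q \<le> L ! p" by simp
  qed
  have Lnn: "\<And>p. p < N \<Longrightarrow> L ! p \<ge> 0"
  proof -
    fix p assume "p < N"
    then obtain i where "i < N" "f i = p" using fb by (metis bij_betw_iff_bijections lessThan_iff)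
    then show "L ! p \<ge> 0" using fv by fastforce
  qed
  have mo: "\<And>j. 1 \<le> j \<Longrightarrow> j \<le> N \<Longrightarrow> mag_ord x j = L ! (j - 1)"
    unfolding mag_ord_def L_def xl_def using dimx by simp
  have pos: "\<And>p q. p < q \<Longrightarrow> q < N \<Longrightarrow> L ! q > 0 \<Longrightarrow> \<alpha> * L ! q \<le> L ! p"
  proof -
    fix p q assume pq: "p < q" "q < N" "L ! q > 0"
    have sub: "{0..q} \<subseteq> f ` supp_vec x"
    proof
      fix r assume "r \<in> {0..q}"
      then have r: "r \<le> q" by simp
      then have "r < N" using pq by simp
      then obtain i where i: "i < N" "f i = r" using fb by (metis bij_betw_iff_bijections lessThan_iff)
      have "L ! r \<ge> L ! q" using sorted r pq by simp
      then have "\<bar>x $ i\<bar> > 0" using fv i pq by simp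
      then have "i \<in> supp_vec x" unfolding supp_vec_def using i dimx by simp
      then show "r \<in> f ` supp_vec x" using i by blast
    qed
    have fin: "finite (supp_vec x)" unfolding supp_vec_def by simp
    have "card {0..q} \<le> card (f ` supp_vec x)" using sub fin by (meson card_mono finite_imageI)
    also have "\<dots> \<le> card (supp_vec x)" using fin card_image_le by blast
    also have "\<dots> \<le> K" using l0 unfolding l0_def .
    finally have qK: "q + 1 \<le> K" by simp
    have "p + 1 \<in> {1..K-1}" using qK pq by simp
    then have h: "\<bar>mag_ord x (p+1)\<bar> \<ge> \<alpha> * \<bar>mag_ord x (p + 1 + 1)\<bar>" using hyp by blast
    have "mag_ord x (p+1) = L ! p" using mo[of "p+1"] pq by simp
    moreover have "mag_ord x (p+1+1) = L ! (p+1)" using mo[of "p+1+1"] pq by simp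
    ultimately have "L ! p \<ge> \<alpha> * L ! (p+1)" using h Lnn pq by simp
    moreover have "L ! (p+1) \<ge> L ! q" using sorted pq by simp
    ultimately show "\<alpha> * L ! q \<le> L ! p" using a1
      by (smt (verit) mult_left_mono)
  qed
  have "f i \<noteq> f k" using fb ik by (metis bij_betw_iff_bijections lessThan_iff)
  moreover have "f i < N" "f k < N" using fb ik by (auto simp: bij_betw_def)
  ultimately consider "f k < f i" | "f i < f k" by linarith
  then show ?thesis
  proof cases
    case 1
    have "L ! f i > 0" using fv ik by fastforce
    then show ?thesis using pos[of "f k" "f i"] fv ik 1 \<open>f i < N\<close> by simp
  next
    case 2
    have "L ! f k > 0" using fv ik by fastforce
    then have "\<alpha> * L ! f k \<le> L ! f i" using pos[of "f i" "f k"] 2 \<open>f k < N\<close> by simp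
    then have "\<alpha> * \<bar>x $ k\<bar> \<le> \<bar>x $ i\<bar>" using fv ik by simp
    moreover have "\<bar>x $ k\<bar> > 0" using ik by simp
    ultimately show ?thesis using a1 ik
      by (smt (verit) mult_less_cancel_right2)
  qed
qed



lemma sp_sum: "a \<in> carrier_vec n \<Longrightarrow> b \<in> carrier_vec n \<Longrightarrow> a \<bullet> b = (\<Sum>i<n. a $ i * b $ i)"
  unfolding scalar_prod_def by (simp add: atLeast0LessThan)

lemma sqnorm_sp: "sqnorm v = v \<bullet> v"
  unfolding sqnorm_def scalar_prod_def by (simp add: atLeast0LessThan power2_eq_square)

lemma sqnorm_nonneg: "sqnorm v \<ge> 0"
  unfolding sqnorm_def by (simp add: sum_nonneg)

lemma sqnorm_zero: assumes "v \<in> carrier_vec n" "sqnorm v = 0" shows "v = 0\<^sub>v n"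
proof (rule eq_vecI)
  show "dim_vec v = dim_vec (0\<^sub>v n)" using assms by simp
  fix i assume "i < dim_vec (0\<^sub>v n)"
  then have i: "i < dim_vec v" using assms by simp
  have "\<forall>k\<in>{..<dim_vec v}. (v $ k)^2 = 0"
    using assms(2) unfolding sqnorm_def by (subst sum_nonneg_eq_0_iff[symmetric]) auto
  then show "v $ i = 0\<^sub>v n $ i" using i assms by auto
qed

lemma sqnorm_comb: assumes "a \<in> carrier_vec n" "b \<in> carrier_vec n"
  shows "sqnorm (s \<cdot>\<^sub>v a + b) = s^2 * sqnorm a + 2 * s * (a \<bullet> b) + sqnorm b"
proof -
  have "sqnorm (s \<cdot>\<^sub>v a + b) = (\<Sum>i<n. (s * a $ i + b $ i)^2)"
    unfolding sqnorm_def using assms by simp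
  also have "\<dots> = (\<Sum>i<n. s^2 * (a $ i)^2 + 2 * s * (a $ i * b $ i) + (b $ i)^2)"
    by (rule sum.cong) (auto simp: power2_eq_square algebra_simps)
  also have "\<dots> = s^2 * sqnorm a + 2 * s * (a \<bullet> b) + sqnorm b"
    unfolding sqnorm_def using assms by (simp add: sp_sum[OF assms] sum.distrib sum_distrib_left)
  finally show ?thesis .
qed

lemma sqnorm_minus: assumes "a \<in> carrier_vec n" "b \<in> carrier_vec n"
  shows "sqnorm (a - b) = sqnorm a - 2 * (a \<bullet> b) + sqnorm b"
proof -
  have "sqnorm (a - b) = (\<Sum>i<n. (a $ i - b $ i)^2)"
    unfolding sqnorm_def using assms by simp
  also have "\<dots> = (\<Sum>i<n. (a $ i)^2 - 2 * (a $ i * b $ i) + (b $ i)^2)"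
    by (rule sum.cong) (auto simp: power2_eq_square algebra_simps)
  also have "\<dots> = sqnorm a - 2 * (a \<bullet> b) + sqnorm b"
    unfolding sqnorm_def using assms by (simp add: sp_sum[OF assms] sum.distrib sum_subtractf sum_distrib_left)
  finally show ?thesis .
qed

lemma supp_comb: assumes "a \<in> carrier_vec n" "b \<in> carrier_vec n"
  shows "supp_vec (s \<cdot>\<^sub>v a + b) \<subseteq> supp_vec a \<union> supp_vec b"
  using assms unfolding supp_vec_def by auto

lemma supp_minus: assumes "a \<in> carrier_vec n" "b \<in> carrier_vec n"
  shows "supp_vec (a - b) \<subseteq> supp_vec a \<union> supp_vec b"
  using assms unfolding supp_vec_def by auto

lemma l0_le: assumes "supp_vec v \<subseteq> S" "finite S" shows "l0 v \<le> card S"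
  unfolding l0_def using assms card_mono by blast

lemma supp_unit: "j < n \<Longrightarrow> supp_vec (unit_vec n j :: real vec) = {j}"
  unfolding supp_vec_def by (auto split: if_splits)

lemma sqnorm_unit: assumes "j < n" shows "sqnorm (unit_vec n j :: real vec) = 1"
proof -
  have "sqnorm (unit_vec n j :: real vec) = unit_vec n j \<bullet> unit_vec n j" by (rule sqnorm_sp)
  also have "\<dots> = 1" using assms by simp
  finally show ?thesis .
qed

lemma mat_unit: fixes \<Phi> :: "real mat" assumes "\<Phi> \<in> carrier_mat M N" "j < N"
  shows "\<Phi> *\<^sub>v unit_vec N j = col \<Phi> j"
proof (rule eq_vecI)
  fix i assume "i < dim_vec (col \<Phi> j)"
  then have i: "i < M" using assms by simp
  have "row \<Phi> i \<bullet> unit_vec N j = row \<Phi> i $ j" using assms by (intro scalar_prod_right_unit) simp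
  moreover have "(\<Phi> *\<^sub>v unit_vec N j) $ i = row \<Phi> i \<bullet> unit_vec N j" using assms i by (intro index_mult_mat_vec) simp
  moreover have "col \<Phi> j $ i = row \<Phi> i $ j" using assms i by simp
  ultimately show "(\<Phi> *\<^sub>v unit_vec N j) $ i = col \<Phi> j $ i" by simp
qed (use assms in simp)

lemma real_key:
  fixes E A B d :: real
  assumes h: "\<And>s. 2 * s * E \<le> d * (s^2 * A + B)" and A: "A \<ge> 0" and B: "B \<ge> 0" and d: "d \<ge> 0"
  shows "\<bar>E\<bar> \<le> d * sqrt A * sqrt B"
proof -
  define e where "e = \<bar>E\<bar>"
  have ht: "\<And>t. t \<ge> 0 \<Longrightarrow> 2 * t * e \<le> d * (t^2 * A + B)"
  proof -
    fix t :: real assume t: "t \<ge> 0"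
    show "2 * t * e \<le> d * (t^2 * A + B)"
    proof (cases "E \<ge> 0")
      case True then show ?thesis using h[of t] by (simp add: e_def)
    next
      case False then show ?thesis using h[of "-t"] by (simp add: e_def)
    qed
  qed
  have e0: "e \<ge> 0" by (simp add: e_def)
  show ?thesis
  proof (cases "e = 0")
    case True then show ?thesis using d A B by (simp add: e_def)
  next
    case False
    then have ep: "e > 0" using e0 by simp
    show ?thesis
    proof (cases "A = 0")
      case True
      have "2 * ((d * B + 1) / (2 * e)) * e \<le> d * (((d * B + 1) / (2 * e))^2 * A + B)"
        using ht ep d B by (intro ht) (simp add: divide_nonneg_pos add_nonneg_pos)
      then show ?thesis using True ep by simp
    next
      case False
      then have Ap: "A > 0" using A by simp
      show ?thesis
      proof (cases "B = 0")
        case True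
        show ?thesis
        proof (cases "d = 0")
          case True
          then show ?thesis using ht[of 1] ep by simp
        next
          case False
          then have dp: "d > 0" using d by simp
          have "2 * (e / (d * A)) * e \<le> d * ((e / (d * A))^2 * A + B)"
            using ep dp Ap by (intro ht) simp
          also have "\<dots> = e^2 / (d * A)" using \<open>B = 0\<close> dp Ap by (simp add: power2_eq_square field_simps)
          finally have "2 * (e^2 / (d * A)) \<le> e^2 / (d * A)" by (simp add: power2_eq_square)
          then have "e^2 / (d * A) \<le> 0" by (smt (verit))
          moreover have "e^2 / (d * A) > 0" using ep dp Ap by simp
          ultimately show ?thesis by simp
        qed
      next
        case False
        then have Bp: "B > 0" using B by simp
        define t where "t = sqrt B / sqrt A"
        have t0: "t \<ge> 0" unfolding t_def using Ap Bp by (intro divide_nonneg_nonneg) auto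
        have "t^2 * A = B" unfolding t_def using Ap Bp by (simp add: power_divide)
        then have "2 * t * e \<le> d * (2 * B)" using ht[OF t0] by simp
        then have "(sqrt B / sqrt A) * e \<le> d * B" unfolding t_def by simp
        then have l1: "sqrt B * e \<le> d * B * sqrt A" using Ap by (simp add: field_simps)
        have sB: "sqrt B * sqrt B = B" using Bp by simp
        have "sqrt B * (d * sqrt A * sqrt B) = d * sqrt A * (sqrt B * sqrt B)"
          by (simp only: mult_ac)
        also have "\<dots> = d * B * sqrt A" by (simp only: sB mult_ac)
        finally have eqX: "sqrt B * (d * sqrt A * sqrt B) = d * B * sqrt A" .
        have "sqrt B * e \<le> sqrt B * (d * sqrt A * sqrt B)" using l1 by (simp only: eqX)
        then have "e \<le> d * sqrt A * sqrt B" using Bp by (simp add: mult_le_cancel_left_pos)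
        then show ?thesis by (simp add: e_def)
      qed
    qed
  qed
qed

lemma rip_ip:
  assumes rip: "RIP \<Phi> m \<delta>" and Phi: "\<Phi> \<in> carrier_mat M N"
    and ab: "a \<in> carrier_vec N" "b \<in> carrier_vec N" and S: "finite S" "supp_vec a \<subseteq> S" "supp_vec b \<subseteq> S"
    "card S \<le> m"
  shows "\<bar>(\<Phi> *\<^sub>v a) \<bullet> (\<Phi> *\<^sub>v b) - a \<bullet> b\<bar> \<le> \<delta> * sqrt (sqnorm a) * sqrt (sqnorm b)"
proof -
  have d: "0 < \<delta>" "\<delta> < 1" using rip unfolding RIP_def by blast+
  have dc: "dim_col \<Phi> = N" using Phi by simp
  have Pa: "\<Phi> *\<^sub>v a \<in> carrier_vec M" "\<Phi> *\<^sub>v b \<in> carrier_vec M" using Phi ab by auto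
  define A where "A = sqnorm a"
  define B where "B = sqnorm b"
  define D where "D = a \<bullet> b"
  define A' where "A' = sqnorm (\<Phi> *\<^sub>v a)"
  define B' where "B' = sqnorm (\<Phi> *\<^sub>v b)"
  define D' where "D' = (\<Phi> *\<^sub>v a) \<bullet> (\<Phi> *\<^sub>v b)"
  have bnd: "(1 - \<delta>) * (s^2 * A + 2 * s * D + B) \<le> s^2 * A' + 2 * s * D' + B' \<and>
     s^2 * A' + 2 * s * D' + B' \<le> (1 + \<delta>) * (s^2 * A + 2 * s * D + B)" for s
  proof -
    have pc: "s \<cdot>\<^sub>v a + b \<in> carrier_vec (dim_col \<Phi>)" using ab dc by simp
    have "l0 (s \<cdot>\<^sub>v a + b) \<le> card S"
      using l0_le[OF _ S(1)] supp_comb[OF ab, of s] S by blast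
    then have "l0 (s \<cdot>\<^sub>v a + b) \<le> m" using S by simp
    then have r: "(1 - \<delta>) * sqnorm (s \<cdot>\<^sub>v a + b) \<le> sqnorm (\<Phi> *\<^sub>v (s \<cdot>\<^sub>v a + b)) \<and>
        sqnorm (\<Phi> *\<^sub>v (s \<cdot>\<^sub>v a + b)) \<le> (1 + \<delta>) * sqnorm (s \<cdot>\<^sub>v a + b)"
      using rip pc unfolding RIP_def by blast
    have "\<Phi> *\<^sub>v (s \<cdot>\<^sub>v a + b) = s \<cdot>\<^sub>v (\<Phi> *\<^sub>v a) + \<Phi> *\<^sub>v b"
      using Phi ab by (simp add: mult_add_distrib_mat_vec[OF Phi] mult_mat_vec[OF Phi])
    then have "sqnorm (\<Phi> *\<^sub>v (s \<cdot>\<^sub>v a + b)) = s^2 * A' + 2 * s * D' + B'"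
      using sqnorm_comb[OF Pa] A'_def B'_def D'_def by simp
    moreover have "sqnorm (s \<cdot>\<^sub>v a + b) = s^2 * A + 2 * s * D + B"
      using sqnorm_comb[OF ab] A_def B_def D_def by simp
    ultimately show ?thesis using r by simp
  qed
  have key: "2 * s * (D' - D) \<le> \<delta> * (s^2 * A + B)" for s
  proof -
    have "s^2 * A' + 2 * s * D' + B' \<le> (1 + \<delta>) * (s^2 * A + 2 * s * D + B)" using bnd[of s] by simp
    moreover have "(1 - \<delta>) * ((-s)^2 * A + 2 * (-s) * D + B) \<le> (-s)^2 * A' + 2 * (-s) * D' + B'"
      using bnd[of "-s"] by simp
    ultimately show ?thesis by (simp add: ring_distribs)
  qed
  have "\<bar>D' - D\<bar> \<le> \<delta> * sqrt A * sqrt B"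
    by (rule real_key[OF key]) (use d in \<open>auto simp: A_def B_def sqnorm_nonneg\<close>)
  then show ?thesis by (simp add: A_def B_def D_def D'_def)
qed




lemma real_orth_aux: "W + 1 > (0::real) \<Longrightarrow> (- c / (W + 1))^2 * W + 2 * (- c / (W + 1)) * c = c^2 * (W - 2 * (W + 1)) / (W + 1)^2"
  by (simp add: power2_eq_square divide_simps) (simp add: algebra_simps)

lemma real_orth:
  fixes W c :: real
  assumes h: "\<And>s. 0 \<le> s^2 * W + 2 * s * c" and W: "W \<ge> 0"
  shows "c = 0"
proof (rule ccontr)
  assume c: "c \<noteq> 0"
  define s where "s = - c / (W + 1)"
  have W1: "W + 1 > 0" using W by simp
  have "s^2 * W + 2 * s * c = c^2 * (W - 2 * (W + 1)) / (W + 1)^2"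
    unfolding s_def using W1 by (rule real_orth_aux)
  also have "\<dots> < 0"
    using c W1 W by (intro divide_neg_pos) (auto intro!: mult_pos_neg)
  finally show False using h[of s] by simp
qed

lemma lsq_orth:
  assumes Phi: "\<Phi> \<in> carrier_mat M N" and y: "y \<in> carrier_vec M"
    and lsq: "is_lsq \<Phi> y Lam z" and w: "w \<in> carrier_vec N" "supp_vec w \<subseteq> Lam"
  shows "(y - \<Phi> *\<^sub>v z) \<bullet> (\<Phi> *\<^sub>v w) = 0"
proof -
  have dc: "dim_col \<Phi> = N" using Phi by simp
  have z: "z \<in> carrier_vec N" "supp_vec z \<subseteq> Lam" using lsq dc unfolding is_lsq_def by auto
  define r where "r = y - \<Phi> *\<^sub>v z"
  have rc: "r \<in> carrier_vec M" unfolding r_def using y Phi z by auto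
  have Pw: "\<Phi> *\<^sub>v w \<in> carrier_vec M" using Phi w by auto
  have "0 \<le> s^2 * sqnorm (\<Phi> *\<^sub>v w) + 2 * s * (-((\<Phi> *\<^sub>v w) \<bullet> r))" for s
  proof -
    have vc: "s \<cdot>\<^sub>v w + z \<in> carrier_vec (dim_col \<Phi>)" using w z dc by simp
    have vs: "supp_vec (s \<cdot>\<^sub>v w + z) \<subseteq> Lam" using supp_comb[OF w(1) z(1), of s] w z by blast
    have le: "sqnorm (y - \<Phi> *\<^sub>v z) \<le> sqnorm (y - \<Phi> *\<^sub>v (s \<cdot>\<^sub>v w + z))"
      using lsq vc vs unfolding is_lsq_def by blast
    have "\<Phi> *\<^sub>v (s \<cdot>\<^sub>v w + z) = s \<cdot>\<^sub>v (\<Phi> *\<^sub>v w) + \<Phi> *\<^sub>v z"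
      using Phi w z by (simp add: mult_add_distrib_mat_vec[OF Phi] mult_mat_vec[OF Phi])
    then have "y - \<Phi> *\<^sub>v (s \<cdot>\<^sub>v w + z) = (-s) \<cdot>\<^sub>v (\<Phi> *\<^sub>v w) + r"
      unfolding r_def by (intro eq_vecI) (use Phi y z w in auto)
    then have "sqnorm (y - \<Phi> *\<^sub>v (s \<cdot>\<^sub>v w + z)) = s^2 * sqnorm (\<Phi> *\<^sub>v w) + 2 * (-s) * ((\<Phi> *\<^sub>v w) \<bullet> r) + sqnorm r"
      using sqnorm_comb[OF Pw rc, of "-s"] by simp
    then show ?thesis using le[folded r_def] by simp
  qed
  then have "-((\<Phi> *\<^sub>v w) \<bullet> r) = 0" using real_orth sqnorm_nonneg by blast
  then show ?thesis unfolding r_def[symmetric] using comm_scalar_prod[OF rc Pw] by simp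
qed



lemma step_main:
  fixes \<Phi> :: "real mat" and x xl :: "real vec"
  assumes Phi: "\<Phi> \<in> carrier_mat M N" and rip: "RIP \<Phi> (K + 1) \<delta>" and d3: "\<delta> < 1 / 3"
    and xc: "x \<in> carrier_vec N" and T: "T = supp_vec x" and cT: "card T \<le> K" and K1: "K \<ge> 1"
    and alpha: "\<alpha> > (1 + 2 * (\<delta> / (1 - \<delta>)) * sqrt (real K - 1)) / (1 - 2 * (\<delta> / (1 - \<delta>)))"
    and ord: "\<And>i k. i < N \<Longrightarrow> k < N \<Longrightarrow> i \<noteq> k \<Longrightarrow> x $ i \<noteq> 0 \<Longrightarrow> \<bar>x $ i\<bar> \<le> \<bar>x $ k\<bar> \<Longrightarrow> \<alpha> * \<bar>x $ i\<bar> \<le> \<bar>x $ k\<bar>"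
    and LT: "Lam \<subseteq> T" and nT: "\<not> T \<subseteq> Lam"
    and xl: "xl \<in> carrier_vec N" "supp_vec xl \<subseteq> Lam"
    and orth: "\<And>w. w \<in> carrier_vec N \<Longrightarrow> supp_vec w \<subseteq> Lam \<Longrightarrow> (\<Phi> *\<^sub>v x - \<Phi> *\<^sub>v xl) \<bullet> (\<Phi> *\<^sub>v w) = 0"
    and j: "j < N" and jmax: "\<And>i. i < N \<Longrightarrow> \<bar>(transpose_mat \<Phi> *\<^sub>v (\<Phi> *\<^sub>v x - \<Phi> *\<^sub>v xl)) $ i\<bar> \<le> \<bar>(transpose_mat \<Phi> *\<^sub>v (\<Phi> *\<^sub>v x - \<Phi> *\<^sub>v xl)) $ j\<bar>"
  shows "j \<in> T - Lam"
proof -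
  have dpos: "0 < \<delta>" "\<delta> < 1" using rip unfolding RIP_def by blast+
  define d where "d = \<delta> / (1 - \<delta>)"
  have d0: "d \<ge> 0" unfolding d_def using dpos by simp
  have d2: "1 - 2 * d > 0" unfolding d_def using dpos d3 by (simp add: field_simps)
  define sK where "sK = sqrt (real K - 1)"
  have sK0: "sK \<ge> 0" unfolding sK_def using K1 by simp
  have al: "\<alpha> * (1 - 2 * d) > 1 + 2 * d * sK"
    using alpha d2 unfolding d_def[symmetric] sK_def[symmetric] by (simp add: pos_divide_less_eq)
  have a1: "\<alpha> > 1"
  proof (rule ccontr)
    assume "\<not> 1 < \<alpha>"
    then have "\<alpha> \<le> 1" by simp
    then have "\<alpha> * (1 - 2 * d) \<le> 1 - 2 * d" using mult_right_mono[of \<alpha> 1 "1 - 2 * d"] d2 by simp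
    moreover have "\<alpha> * (1 - 2 * d) > 1" using al d0 sK0 by (smt (verit) mult_nonneg_nonneg)
    ultimately show False using d0 by linarith
  qed
  have dimx: "dim_vec x = N" using xc by simp
  have TN: "T \<subseteq> {..<N}" unfolding T supp_vec_def using dimx by auto
  have finT: "finite T" using TN finite_subset by blast
  have xT: "\<And>i. i < N \<Longrightarrow> i \<notin> T \<Longrightarrow> x $ i = 0" unfolding T supp_vec_def using dimx by auto
  have xlL: "\<And>i. i < N \<Longrightarrow> i \<notin> Lam \<Longrightarrow> xl $ i = 0" using xl unfolding supp_vec_def by auto
  define z where "z = x - xl"
  have zc: "z \<in> carrier_vec N" unfolding z_def using xc xl by simp
  have Pz: "\<Phi> *\<^sub>v z = \<Phi> *\<^sub>v x - \<Phi> *\<^sub>v xl" unfolding z_def using Phi xc xl by (simp add: mult_minus_distrib_mat_vec)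
  define r where "r = \<Phi> *\<^sub>v z"
  have rc: "r \<in> carrier_vec M" unfolding r_def using Phi zc by simp
  define h where "h = transpose_mat \<Phi> *\<^sub>v r"
  have hj: "\<And>i. i < N \<Longrightarrow> h $ i = (\<Phi> *\<^sub>v unit_vec N i) \<bullet> r"
    unfolding h_def using Phi by (simp add: mat_unit[OF Phi])
  have jmax': "\<And>i. i < N \<Longrightarrow> \<bar>h $ i\<bar> \<le> \<bar>h $ j\<bar>" using jmax unfolding h_def r_def Pz by simp
  have orth': "\<And>w. w \<in> carrier_vec N \<Longrightarrow> supp_vec w \<subseteq> Lam \<Longrightarrow> r \<bullet> (\<Phi> *\<^sub>v w) = 0"
    using orth unfolding r_def Pz by simp
  define u where "u = vec N (\<lambda>i. if i \<in> T - Lam then x $ i else 0)"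
  have uc: "u \<in> carrier_vec N" unfolding u_def by simp
  define w where "w = z - u"
  have wc: "w \<in> carrier_vec N" unfolding w_def using zc uc by simp
  have zu: "\<And>i. i < N \<Longrightarrow> i \<notin> Lam \<Longrightarrow> z $ i = u $ i"
    unfolding z_def u_def using xc xl xT xlL by auto
  have ws: "supp_vec w \<subseteq> Lam"
  proof
    fix i assume "i \<in> supp_vec w"
    then have i: "i < N" "w $ i \<noteq> 0" unfolding supp_vec_def using wc by auto
    then have "z $ i \<noteq> u $ i" unfolding w_def using zc uc by auto
    then show "i \<in> Lam" using zu[OF i(1)] by blast
  qed
  have Pw: "\<Phi> *\<^sub>v w \<in> carrier_vec M" using Phi wc by simp
  have Pu: "\<Phi> *\<^sub>v u = r - \<Phi> *\<^sub>v w"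
  proof -
    have "u = z - w" unfolding w_def using zc uc by auto
    then show ?thesis unfolding r_def using Phi zc wc by (simp add: mult_minus_distrib_mat_vec)
  qed
  have "sqnorm (\<Phi> *\<^sub>v u) = sqnorm r - 2 * (r \<bullet> (\<Phi> *\<^sub>v w)) + sqnorm (\<Phi> *\<^sub>v w)"
    unfolding Pu by (rule sqnorm_minus[OF rc Pw])
  then have PuPz: "sqnorm r \<le> sqnorm (\<Phi> *\<^sub>v u)" using orth'[OF wc ws] sqnorm_nonneg[of "\<Phi> *\<^sub>v w"] by simp
  have zs: "supp_vec z \<subseteq> T"
  proof
    fix i assume "i \<in> supp_vec z"
    then have i: "i < N" "z $ i \<noteq> 0" unfolding supp_vec_def using zc by auto
    then have "x $ i \<noteq> xl $ i" unfolding z_def using xc xl by auto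
    then show "i \<in> T" using xT[OF i(1)] xlL[OF i(1)] LT by (metis subsetD)
  qed
  have us: "supp_vec u \<subseteq> T"
    unfolding supp_vec_def u_def by (auto split: if_splits)
  have dc: "dim_col \<Phi> = N" using Phi by simp
  have rz: "(1 - \<delta>) * sqnorm z \<le> sqnorm r"
  proof -
    have "l0 z \<le> K + 1" using l0_le[OF zs finT] cT by simp
    then show ?thesis using rip zc dc unfolding RIP_def r_def by blast
  qed
  have ru: "sqnorm (\<Phi> *\<^sub>v u) \<le> (1 + \<delta>) * sqnorm u"
  proof -
    have "l0 u \<le> K + 1" using l0_le[OF us finT] cT by simp
    then show ?thesis using rip uc dc unfolding RIP_def by blast
  qed
  define Z where "Z = sqnorm z"
  define U where "U = sqnorm u"
  have Z0: "Z \<ge> 0" "U \<ge> 0" unfolding Z_def U_def by (simp_all add: sqnorm_nonneg)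
  have ZU: "(1 - \<delta>) * Z \<le> (1 + \<delta>) * U" using rz PuPz ru unfolding Z_def U_def by simp
  define E where "E = d * sqrt U"
  have E0: "E \<ge> 0" unfolding E_def using d0 Z0 by simp
  have dZ: "\<delta> * sqrt Z \<le> E"
  proof -
    have "\<delta>^2 * Z \<le> d^2 * U"
    proof -
      have "\<delta>^2 * Z = \<delta>^2 * ((1 - \<delta>) * Z) / (1 - \<delta>)" using dpos by simp
      also have "\<dots> \<le> \<delta>^2 * ((1 + \<delta>) * U) / (1 - \<delta>)"
        using ZU dpos by (intro divide_right_mono mult_left_mono) auto
      also have "\<dots> \<le> d^2 * U"
      proof -
        have ne: "1 - \<delta> \<noteq> 0" using dpos by simp
        have "\<delta>^2 * ((1 + \<delta>) * U) / (1 - \<delta>) = (\<delta>^2 * ((1 + \<delta>) * U)) * (1 - \<delta>) / (1 - \<delta>)^2"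
          using ne by (simp add: power2_eq_square)
        also have "\<dots> = (\<delta>^2 * U) * ((1 + \<delta>) * (1 - \<delta>)) / (1 - \<delta>)^2"
          by (simp add: mult_ac)
        also have "\<dots> \<le> (\<delta>^2 * U) * 1 / (1 - \<delta>)^2"
          using dpos Z0 by (intro divide_right_mono mult_left_mono) (auto simp: algebra_simps)
        also have "\<dots> = d^2 * U" unfolding d_def by (simp add: power_divide)
        finally show ?thesis .
      qed
      finally show ?thesis .
    qed
    then have "sqrt (\<delta>^2 * Z) \<le> sqrt (d^2 * U)" by simp
    then show ?thesis unfolding E_def using dpos d0 by (simp add: real_sqrt_mult)
  qed
  have hbound: "\<And>i. i < N \<Longrightarrow> \<bar>h $ i - z $ i\<bar> \<le> E"
  proof -
    fix i assume i: "i < N"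
    have ec: "unit_vec N i \<in> carrier_vec N" by simp
    have "\<bar>(\<Phi> *\<^sub>v unit_vec N i) \<bullet> (\<Phi> *\<^sub>v z) - unit_vec N i \<bullet> z\<bar> \<le> \<delta> * sqrt (sqnorm (unit_vec N i :: real vec)) * sqrt (sqnorm z)"
      apply (rule rip_ip[OF rip Phi ec zc, of "insert i T"])
      using finT supp_unit[OF i] zs cT card_insert_le[of T i] finT apply auto
      by (simp add: card_insert_if)
    then have "\<bar>h $ i - z $ i\<bar> \<le> \<delta> * sqrt Z"
      using hj[OF i] i zc sqnorm_unit[OF i] unfolding r_def Z_def by simp
    then show "\<bar>h $ i - z $ i\<bar> \<le> E" using dZ by simp
  qed
  define R where "R = T - Lam"
  have Rne: "R \<noteq> {}" unfolding R_def using nT by auto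
  have finR: "finite R" unfolding R_def using finT by simp
  define a where "a = Max ((\<lambda>i. \<bar>x $ i\<bar>) ` R)"
  have "a \<in> (\<lambda>i. \<bar>x $ i\<bar>) ` R" unfolding a_def using Rne finR by simp
  then obtain js where js: "js \<in> R" "\<bar>x $ js\<bar> = a" by auto
  have amax: "\<And>i. i \<in> R \<Longrightarrow> \<bar>x $ i\<bar> \<le> a" unfolding a_def using finR by simp
  have jsN: "js < N" using js TN unfolding R_def by auto
  have apos: "a > 0" using js unfolding R_def T supp_vec_def by auto
  have others: "\<And>i. i \<in> R - {js} \<Longrightarrow> (x $ i)^2 \<le> (a / \<alpha>)^2"
  proof -
    fix i assume i: "i \<in> R - {js}"
    then have iN: "i < N" using TN unfolding R_def by auto
    have "x $ i \<noteq> 0" using i unfolding R_def T supp_vec_def by auto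
    then have "\<alpha> * \<bar>x $ i\<bar> \<le> \<bar>x $ js\<bar>" using ord[OF iN jsN] i amax js by auto
    then have "\<bar>x $ i\<bar> \<le> a / \<alpha>" using a1 js by (simp add: pos_le_divide_eq mult.commute)
    then show "(x $ i)^2 \<le> (a / \<alpha>)^2" by (metis abs_ge_zero power2_abs power_mono)
  qed
  have Ueq: "U = (\<Sum>i\<in>R. (x $ i)^2)"
  proof -
    have "U = (\<Sum>i<N. (if i \<in> R then x $ i else 0)^2)" unfolding U_def sqnorm_def u_def R_def by simp
    also have "\<dots> = (\<Sum>i<N. if i \<in> R then (x $ i)^2 else 0)" by (rule sum.cong) auto
    also have "\<dots> = (\<Sum>i\<in>{..<N} \<inter> R. (x $ i)^2)" by (simp add: sum.inter_restrict)
    also have "{..<N} \<inter> R = R" using TN unfolding R_def by auto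
    finally show ?thesis .
  qed
  have Ub: "U \<le> a^2 + (real K - 1) * (a / \<alpha>)^2"
  proof -
    have "U = (x $ js)^2 + (\<Sum>i\<in>R - {js}. (x $ i)^2)" unfolding Ueq using js finR by (simp add: sum.remove)
    also have "(\<Sum>i\<in>R - {js}. (x $ i)^2) \<le> real (card (R - {js})) * (a / \<alpha>)^2"
      using sum_bounded_above[of "R - {js}" "\<lambda>i. (x $ i)^2" "(a / \<alpha>)^2"] others by simp
    also have "real (card (R - {js})) \<le> real K - 1"
    proof -
      have "card R \<le> card T" unfolding R_def using finT by (simp add: card_mono)
      then have "card (R - {js}) \<le> K - 1" using js finR cT by simp
      then show ?thesis using K1 by linarith
    qed
    moreover have "(x $ js)^2 = a^2" using js(2) power2_abs[of "x $ js"] by simp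
    ultimately show ?thesis using mult_right_mono[of "real (card (R - {js}))" "real K - 1" "(a / \<alpha>)^2"] by simp
  qed
  have sU: "sqrt U \<le> a + sK * (a / \<alpha>)"
  proof -
    have "sqrt U \<le> sqrt (a^2 + (real K - 1) * (a / \<alpha>)^2)" using Ub by simp
    also have "\<dots> \<le> sqrt (a^2) + sqrt ((real K - 1) * (a / \<alpha>)^2)"
      using K1 by (intro sqrt_add_le_add_sqrt) auto
    also have "\<dots> = a + sK * (a / \<alpha>)" unfolding sK_def using apos a1 by (simp add: real_sqrt_mult)
    finally show ?thesis .
  qed
  have gap: "a - E > a / \<alpha> + E"
  proof -
    have "2 * E \<le> 2 * d * (a + sK * (a / \<alpha>))" unfolding E_def using sU d0 by (simp add: mult_left_mono)
    also have "\<dots> = (a / \<alpha>) * (2 * d * (\<alpha> + sK))" using a1 by (simp add: field_simps)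
    also have "\<dots> < (a / \<alpha>) * (\<alpha> - 1)"
      using al apos a1 by (intro mult_strict_left_mono) (auto simp: algebra_simps)
    also have "\<dots> = a - a / \<alpha>" using a1 by (simp add: field_simps)
    finally show ?thesis by simp
  qed
  have jsL: "js \<notin> Lam" using js unfolding R_def by simp
  have hjs: "\<bar>h $ js\<bar> \<ge> a - E"
    using hbound[OF jsN] zu[OF jsN jsL] js unfolding u_def R_def using jsN by auto
  have hj_big: "\<bar>h $ j\<bar> > a / \<alpha> + E" using jmax'[OF jsN] hjs gap by simp
  show "j \<in> T - Lam"
  proof (rule ccontr)
    assume nj: "j \<notin> T - Lam"
    show False
    proof (cases "j \<in> Lam")
      case True
      have "h $ j = (\<Phi> *\<^sub>v unit_vec N j) \<bullet> r" using hj[OF j] .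
      also have "\<dots> = r \<bullet> (\<Phi> *\<^sub>v unit_vec N j)" using comm_scalar_prod[OF _ rc, of "\<Phi> *\<^sub>v unit_vec N j"] Phi by simp
      also have "\<dots> = 0" using orth'[of "unit_vec N j"] supp_unit[OF j] True by simp
      finally have "h $ j = 0" .
      then show False using hj_big apos a1 E0 by (smt (verit) divide_pos_pos)
    next
      case False
      then have "j \<notin> T" using nj by simp
      then have "z $ j = 0" using zu[OF j False] xT[OF j] unfolding u_def using j by auto
      then have "\<bar>h $ j\<bar> \<le> E" using hbound[OF j] by simp
      then show False using hj_big apos a1 by (smt (verit) divide_pos_pos)
    qed
  qed
qed



lemma alpha_gt1:
  assumes rip: "RIP \<Phi> (K + 1) \<delta>" and d3: "\<delta> < 1 / 3" and K1: "K \<ge> 1"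
    and alpha: "\<alpha> > (1 + 2 * (\<delta> / (1 - \<delta>)) * sqrt (real K - 1)) / (1 - 2 * (\<delta> / (1 - \<delta>)))"
  shows "\<alpha> > 1"
proof -
  have dpos: "0 < \<delta>" "\<delta> < 1" using rip unfolding RIP_def by blast+
  define d where "d = \<delta> / (1 - \<delta>)"
  have d0: "d \<ge> 0" unfolding d_def using dpos by simp
  have d2: "1 - 2 * d > 0" unfolding d_def using dpos d3 by (simp add: field_simps)
  define sK where "sK = sqrt (real K - 1)"
  have sK0: "sK \<ge> 0" unfolding sK_def using K1 by simp
  have al: "\<alpha> * (1 - 2 * d) > 1 + 2 * d * sK"
    using alpha d2 unfolding d_def[symmetric] sK_def[symmetric] by (simp add: pos_divide_less_eq)
  show "\<alpha> > 1"
  proof (rule ccontr)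
    assume "\<not> 1 < \<alpha>"
    then have "\<alpha> \<le> 1" by simp
    then have "\<alpha> * (1 - 2 * d) \<le> 1 - 2 * d" using mult_right_mono[of \<alpha> 1 "1 - 2 * d"] d2 by simp
    moreover have "\<alpha> * (1 - 2 * d) > 1" using al d0 sK0 by (smt (verit) mult_nonneg_nonneg)
    ultimately show False using d0 by linarith
  qed
qed

lemma supp_empty: "w \<in> carrier_vec n \<Longrightarrow> supp_vec w \<subseteq> {} \<Longrightarrow> w = 0\<^sub>v n"
  unfolding supp_vec_def by (intro eq_vecI) auto

theorem theorem2:
  fixes \<Phi> :: "real mat" and x :: "real vec" and M N K :: nat and \<delta> \<alpha> :: real
    and Lam :: "nat \<Rightarrow> nat set" and xs :: "nat \<Rightarrow> real vec"
  assumes "\<Phi> \<in> carrier_mat M N"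
    and "K \<ge> 1"
    and "RIP \<Phi> (K + 1) \<delta>"
    and "\<delta> < 1 / 3"
    and "x \<in> carrier_vec N"
    and "l0 x \<le> K"
    and "\<alpha> > (1 + 2 * (\<delta> / (1 - \<delta>)) * sqrt (real K - 1)) / (1 - 2 * (\<delta> / (1 - \<delta>)))"
    and "\<forall>j \<in> {1..K-1}. \<bar>mag_ord x j\<bar> \<ge> \<alpha> * \<bar>mag_ord x (j + 1)\<bar>"
    and "omp_run \<Phi> (\<Phi> *\<^sub>v x) K Lam xs"
  shows "xs K = x"
proof -
  note Phi = assms(1) and K1 = assms(2) and rip = assms(3) and d3 = assms(4) and xc = assms(5)
    and l0x = assms(6) and alpha = assms(7) and hyp = assms(8) and run = assms(9)
  have dc: "dim_col \<Phi> = N" using Phi by simp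
  define T where "T = supp_vec x"
  have cT: "card T \<le> K" using l0x unfolding T_def l0_def .
  have finT: "finite T" unfolding T_def supp_vec_def by simp
  have a1: "\<alpha> > 1" by (rule alpha_gt1[OF rip d3 K1 alpha])
  have ord: "\<And>i k. i < N \<Longrightarrow> k < N \<Longrightarrow> i \<noteq> k \<Longrightarrow> x $ i \<noteq> 0 \<Longrightarrow> \<bar>x $ i\<bar> \<le> \<bar>x $ k\<bar> \<Longrightarrow> \<alpha> * \<bar>x $ i\<bar> \<le> \<bar>x $ k\<bar>"
    using order_lemma[OF xc l0x a1 hyp] by blast
  have y: "\<Phi> *\<^sub>v x \<in> carrier_vec M" using Phi xc by simp
  have L0: "Lam 0 = {}" "xs 0 = 0\<^sub>v N" using run dc unfolding omp_run_def by auto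
  have stp: "\<And>l. l < K \<Longrightarrow> omp_step \<Phi> (\<Phi> *\<^sub>v x) (Lam l) (xs l) (Lam (Suc l)) (xs (Suc l))"
    using run unfolding omp_run_def by blast
  have lsq: "\<And>l. l < K \<Longrightarrow> is_lsq \<Phi> (\<Phi> *\<^sub>v x) (Lam (Suc l)) (xs (Suc l))"
    using stp unfolding omp_step_def Let_def by blast
  have good: "xs l \<in> carrier_vec N \<and> supp_vec (xs l) \<subseteq> Lam l \<and>
      (\<forall>w \<in> carrier_vec N. supp_vec w \<subseteq> Lam l \<longrightarrow> (\<Phi> *\<^sub>v x - \<Phi> *\<^sub>v xs l) \<bullet> (\<Phi> *\<^sub>v w) = 0)"
    if l: "l \<le> K" for l
  proof (cases l)
    case 0
    have "supp_vec (0\<^sub>v N :: real vec) = {}" unfolding supp_vec_def by auto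
    moreover have "\<forall>w \<in> carrier_vec N. supp_vec w \<subseteq> {} \<longrightarrow> (\<Phi> *\<^sub>v x - \<Phi> *\<^sub>v 0\<^sub>v N) \<bullet> (\<Phi> *\<^sub>v w) = 0"
    proof (intro ballI impI)
      fix w :: "real vec" assume "w \<in> carrier_vec N" "supp_vec w \<subseteq> {}"
      then have "w = 0\<^sub>v N" by (rule supp_empty)
      then have "\<Phi> *\<^sub>v w = 0\<^sub>v M" using Phi by (intro eq_vecI) (auto simp: scalar_prod_def)
      then show "(\<Phi> *\<^sub>v x - \<Phi> *\<^sub>v 0\<^sub>v N) \<bullet> (\<Phi> *\<^sub>v w) = 0" using Phi xc by simp
    qed
    ultimately show ?thesis using 0 L0 by simp
  next
    case (Suc l')
    then have l': "l' < K" using l by simp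
    have ls: "is_lsq \<Phi> (\<Phi> *\<^sub>v x) (Lam l) (xs l)" using lsq[OF l'] Suc by simp
    then have "xs l \<in> carrier_vec N" "supp_vec (xs l) \<subseteq> Lam l" using dc unfolding is_lsq_def by auto
    moreover have "\<forall>w \<in> carrier_vec N. supp_vec w \<subseteq> Lam l \<longrightarrow> (\<Phi> *\<^sub>v x - \<Phi> *\<^sub>v xs l) \<bullet> (\<Phi> *\<^sub>v w) = 0"
      using lsq_orth[OF Phi y ls] by blast
    ultimately show ?thesis by simp
  qed
  have inv: "finite (Lam l) \<and> card (Lam l) \<le> l \<and> (T \<subseteq> Lam l \<or> (Lam l \<subseteq> T \<and> card (Lam l) = l))"
    if "l \<le> K" for l
    using that
  proof (induction l)
    case 0
    then show ?case using L0 by simp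
  next
    case (Suc l)
    then have l: "l < K" by simp
    have IH: "finite (Lam l)" "card (Lam l) \<le> l" "T \<subseteq> Lam l \<or> (Lam l \<subseteq> T \<and> card (Lam l) = l)"
      using Suc l by auto
    obtain j where j: "j < N"
      and jmax: "\<And>i. i < N \<Longrightarrow> \<bar>(transpose_mat \<Phi> *\<^sub>v (\<Phi> *\<^sub>v x - \<Phi> *\<^sub>v xs l)) $ i\<bar> \<le> \<bar>(transpose_mat \<Phi> *\<^sub>v (\<Phi> *\<^sub>v x - \<Phi> *\<^sub>v xs l)) $ j\<bar>"
      and LS: "Lam (Suc l) = insert j (Lam l)"
      using stp[OF l] dc unfolding omp_step_def Let_def by blast
    have fin: "finite (Lam (Suc l))" using LS IH by simp
    have cardle: "card (Lam (Suc l)) \<le> Suc l" using LS IH card_insert_le_m1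
      by (metis card_insert_if le_SucI Suc_le_mono)
    show ?case
    proof (cases "T \<subseteq> Lam l")
      case True
      then show ?thesis using fin cardle LS by auto
    next
      case False
      then have LT: "Lam l \<subseteq> T" "card (Lam l) = l" using IH by auto
      have g: "xs l \<in> carrier_vec N" "supp_vec (xs l) \<subseteq> Lam l"
        "\<And>w. w \<in> carrier_vec N \<Longrightarrow> supp_vec w \<subseteq> Lam l \<Longrightarrow> (\<Phi> *\<^sub>v x - \<Phi> *\<^sub>v xs l) \<bullet> (\<Phi> *\<^sub>v w) = 0"
        using good[of l] l by auto
      have "j \<in> T - Lam l"
        by (rule step_main[OF Phi rip d3 xc T_def cT K1 alpha ord LT(1) False g j jmax])
      then have "Lam (Suc l) \<subseteq> T" "card (Lam (Suc l)) = Suc l" using LS LT IH by auto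
      then show ?thesis using fin by simp
    qed
  qed
  have TK: "T \<subseteq> Lam K" and cK: "card (Lam K) \<le> K" and fK: "finite (Lam K)"
  proof -
    have i: "finite (Lam K)" "card (Lam K) \<le> K" "T \<subseteq> Lam K \<or> (Lam K \<subseteq> T \<and> card (Lam K) = K)"
      using inv[of K] by auto
    show "card (Lam K) \<le> K" "finite (Lam K)" using i by auto
    show "T \<subseteq> Lam K"
    proof (cases "T \<subseteq> Lam K")
      case False
      then have "Lam K \<subseteq> T" "card (Lam K) = K" using i by auto
      then have "Lam K = T" using card_subset_eq[OF finT] cT by (metis card_mono finT le_antisym)
      then show ?thesis by simp
    qed simp
  qed
  have lsK: "is_lsq \<Phi> (\<Phi> *\<^sub>v x) (Lam K) (xs K)" using lsq[of "K - 1"] K1 by simp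
  have xK: "xs K \<in> carrier_vec N" "supp_vec (xs K) \<subseteq> Lam K" using lsK dc unfolding is_lsq_def by auto
  have "sqnorm (\<Phi> *\<^sub>v x - \<Phi> *\<^sub>v xs K) \<le> sqnorm (\<Phi> *\<^sub>v x - \<Phi> *\<^sub>v x)"
    using lsK xc dc TK unfolding is_lsq_def T_def by blast
  also have "\<Phi> *\<^sub>v x - \<Phi> *\<^sub>v x = 0\<^sub>v M" using y by simp
  finally have s0: "sqnorm (\<Phi> *\<^sub>v x - \<Phi> *\<^sub>v xs K) \<le> 0" unfolding sqnorm_def by simp
  define v where "v = x - xs K"
  have vc: "v \<in> carrier_vec N" unfolding v_def using xc xK by simp
  have Pv: "\<Phi> *\<^sub>v v = \<Phi> *\<^sub>v x - \<Phi> *\<^sub>v xs K" unfolding v_def using Phi xc xK by (simp add: mult_minus_distrib_mat_vec)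
  have "supp_vec v \<subseteq> Lam K" unfolding v_def using supp_minus[OF xc xK(1)] xK TK T_def by blast
  then have "l0 v \<le> K + 1" using l0_le[OF _ fK] cK by fastforce
  then have "(1 - \<delta>) * sqnorm v \<le> sqnorm (\<Phi> *\<^sub>v v)" using rip vc dc unfolding RIP_def by blast
  then have "(1 - \<delta>) * sqnorm v \<le> 0" using s0 Pv by simp
  moreover have "1 - \<delta> > 0" using rip unfolding RIP_def by simp
  ultimately have "sqnorm v \<le> 0" by (simp add: mult_le_0_iff)
  then have "sqnorm v = 0" using sqnorm_nonneg[of v] by simp
  then have "v = 0\<^sub>v N" using sqnorm_zero[OF vc] by simp
  then show "xs K = x" unfolding v_def using xc xK
    by (metis minus_cancel_vec minus_zero_vec xK(1) carrier_vecD eq_vecI index_minus_vec(1) index_zero_vec(1) right_minus_eq)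
qed

end
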